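(* There is a constant $C>0$, independent of $\varepsilon$ (and of $\delta=\delta(\varepsilon)$), such that for every $\varepsilon$ and every $v\in (H_0^1(\Omega_{\varepsilon\delta}))^n$, \[ \|v\|_{(L^2(\Omega_{\varepsilon\delta}))^n}\le C\,\varepsilon\delta\,\|\nabla v\|_{(L^2(\Omega_{\varepsilon\delta}))^{n\times n}}. \]
   Context: $\Omega\subset\mathbb{R}^n$ ($n=2$ or $3$) is a bounded open set with Lipschitz boundary. $Y=]0,y_1^0[\times\cdots\times]0,y_n^0[$ and $Z=]0,z_1^0[\times\cdots\times]0,z_n^0[$; $Y_s\subset Y$ and $Z_s\subset Z$ are closed sets with non-empty interior and Lipschitz boundary; $Y^*=Y\setminus Y_s$, $Z^*=Z\setminus Z_s$. For $\varepsilon\in(0,1)$, $\delta=\delta(\varepsilon)\in(0,\varepsilon)$ with $\delta(\varepsilon)\to0$; it is assumed that $\overline Y$ is exactly covered by a finite number of cells $\delta\overline Z$ (translated by the lattice $\delta(z_1^0\mathbb{Z}\times\cdots\times z_n^0\mathbb{Z})$) and that $Y_s$ is exactly covered by a finite number of such cells, so that $Y_s$ does not meet the translated obstacles $\delta(\ell z^0+Z_s)$ lying in $Y^*$; for simplicity $\overline\Omega$ is exactly covered by a finite number of cells $\varepsilon\overline Y$. The characteristic functions $\chi_{Y^*}$, $\chi_{Z^*}$ are extended periodically (periods $y_i^0$, resp. $z_i^0$, in the $i$-th variable), and \[ \Omega_{\varepsilon\delta}=\{x\in\Omega:\ \chi_{Y^*}(x/\varepsilon)\,\chi_{Z^*}(x/(\varepsilon\delta))=1\},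 \] a connected domain with obstacles of size $\varepsilon$ and of size $\varepsilon\delta$. *)

theory Defs
  imports "HOL-Analysis.Analysis"
begin

definition lat :: "('n::finite \<Rightarrow> int) \<Rightarrow> real^'n \<Rightarrow> real^'n" where
  "lat k p = (\<chi> i. real_of_int (k i) * p $ i)"

definition cellset :: "real \<Rightarrow> ('n::finite \<Rightarrow> int) \<Rightarrow> real^'n \<Rightarrow> (real^'n) set \<Rightarrow> (real^'n) set" where
  "cellset s k p A = (\<lambda>a. s *\<^sub>R (lat k p + a)) ` A"

definition lipschitz_boundary :: "(real^'n::finite) set \<Rightarrow> bool" where
  "lipschitz_boundary U \<longleftrightarrow>
     (\<forall>p\<in>frontier U. \<exists>r>0. \<exists>e L g. norm e = 1 \<and>
        L-lipschitz_on {x. x \<bullet> e = 0} (g :: real^'n \<Rightarrow> real) \<and>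
        U \<inter> ball p r = {x \<in> ball p r. x \<bullet> e < g (x - (x \<bullet> e) *\<^sub>R e)})"

definition closed_lipschitz :: "(real^'n::finite) set \<Rightarrow> bool" where
  "closed_lipschitz K \<longleftrightarrow> closed K \<and> interior K \<noteq> {} \<and> K = closure (interior K)
     \<and> lipschitz_boundary (interior K)"

definition perforated ::
  "(real^'n::finite) set \<Rightarrow> real^'n \<Rightarrow> (real^'n) set \<Rightarrow> real^'n \<Rightarrow> (real^'n) set \<Rightarrow> real \<Rightarrow> real \<Rightarrow> (real^'n) set" where
  "perforated \<Omega> y0 Ys z0 Zs \<epsilon> \<delta> =
     \<Omega> - (\<Union>k. cellset \<epsilon> k y0 Ys) - (\<Union>l. cellset (\<epsilon> * \<delta>) l z0 Zs)"

text \<open>Vector-valued C^1 test functions with compact support in U, with Jacobian J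
  (J x $ i $ j = partial derivative of component i w.r.t. variable j).\<close>
definition C1c_test :: "(real^'n::finite) set \<Rightarrow> (real^'n \<Rightarrow> real^'n) \<Rightarrow> (real^'n \<Rightarrow> real^'n^'n) \<Rightarrow> bool" where
  "C1c_test U \<phi> J \<longleftrightarrow>
     (\<forall>x. (\<phi> has_derivative (\<lambda>h. J x *v h)) (at x)) \<and> continuous_on UNIV J \<and>
     (\<exists>K. compact K \<and> K \<subseteq> U \<and> (\<forall>x. x \<notin> K \<longrightarrow> \<phi> x = 0))"

text \<open>v \<in> (H_0^1(U))^n with (weak) gradient G: v, G are measurable and v is the
  H^1(U)-limit of C^1 functions compactly supported in U (H_0^1 as the closure of
  the test functions in the H^1 norm).\<close>
definition H01 :: "(real^'n::finite) set \<Rightarrow> (real^'n \<Rightarrow> real^'n) \<Rightarrow> (real^'n \<Rightarrow> real^'n^'n) \<Rightarrow> bool" where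
  "H01 U v G \<longleftrightarrow>
     v \<in> borel_measurable (lebesgue_on U) \<and> G \<in> borel_measurable (lebesgue_on U) \<and>
     (\<exists>\<phi> J. (\<forall>k. C1c_test U (\<phi> k) (J k)) \<and>
        (\<lambda>k. \<integral>\<^sup>+ x. ennreal ((norm (\<phi> k x - v x))\<^sup>2) \<partial>(lebesgue_on U)) \<longlonglongrightarrow> 0 \<and>
        (\<lambda>k. \<integral>\<^sup>+ x. ennreal ((norm (J k x - G x))\<^sup>2) \<partial>(lebesgue_on U)) \<longlonglongrightarrow> 0)"

definition L2norm :: "('a::euclidean_space) set \<Rightarrow> ('a \<Rightarrow> 'b::real_normed_vector) \<Rightarrow> real" where
  "L2norm U f = sqrt (\<integral>x. (norm (f x))\<^sup>2 \<partial>(lebesgue_on U))"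

end

theory Submission
  imports Defs
begin

lemma norm_mat_vec_le:
  fixes A :: "real^'n^'n"
  shows "norm (A *v x) \<le> norm A * norm x"
proof -
  have c: "\<bar>(A *v x) $ i\<bar> \<le> norm (A $ i) * norm x" for i
  proof -
    have "(A *v x) $ i = A $ i \<bullet> x" by (simp add: matrix_vector_mult_def inner_vec_def)
    then show ?thesis using Cauchy_Schwarz_ineq2 by simp
  qed
  have "(norm (A *v x))\<^sup>2 = (\<Sum>i\<in>UNIV. ((A *v x) $ i)\<^sup>2)"
    by (simp add: norm_vec_def L2_set_def sum_nonneg)
  also have "\<dots> \<le> (\<Sum>i\<in>UNIV. (norm (A $ i))\<^sup>2 * (norm x)\<^sup>2)"
    apply (rule sum_mono)
    by (metis c abs_ge_zero power_mono power_mult_distrib real_sqrt_abs real_sqrt_pow2_iff sqrt_le_D)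
  also have "\<dots> = (norm A)\<^sup>2 * (norm x)\<^sup>2"
    by (simp add: norm_vec_def L2_set_def sum_distrib_right sum_nonneg)
  finally have "(norm (A *v x))\<^sup>2 \<le> (norm A * norm x)\<^sup>2" by (simp add: power_mult_distrib)
  then show ?thesis by (meson norm_ge_zero power2_le_imp_le mult_nonneg_nonneg)
qed

lemma cs_integral01:
  fixes f :: "real \<Rightarrow> real"
  assumes "continuous_on {0..1} f"
  shows "(integral {0..1} f)\<^sup>2 \<le> integral {0..1} (\<lambda>t. (f t)\<^sup>2)"
proof -
  define m where "m = integral {0..1} f"
  have i1: "f integrable_on {0..1}" using assms integrable_continuous_interval by blast
  have i2: "(\<lambda>t. (f t)\<^sup>2) integrable_on {0..1}"
    by (intro integrable_continuous_interval continuous_intros assms)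
  have "0 \<le> integral {0..1} (\<lambda>t. (f t - m)\<^sup>2)"
    by (rule integral_nonneg) (intro integrable_continuous_interval continuous_intros assms, simp)
  also have "(\<lambda>t. (f t - m)\<^sup>2) = (\<lambda>t. (f t)\<^sup>2 - (2*m) * f t + m\<^sup>2)"
    by (simp add: power2_eq_square algebra_simps)
  also have "integral {0..1} \<dots> = integral {0..1} (\<lambda>t. (f t)\<^sup>2) - (2*m) * m + m\<^sup>2"
  proof -
    have i3: "(\<lambda>t. (2*m) * f t) integrable_on {0..1}" using integrable_on_cmult_left[OF i1] by simp
    have "integral {0..1} (\<lambda>t. (f t)\<^sup>2 - (2*m) * f t + m\<^sup>2)
        = integral {0..1} (\<lambda>t. (f t)\<^sup>2 - (2*m) * f t) + integral {0..1} (\<lambda>t::real. m\<^sup>2)"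
      using integral_add[OF integrable_diff[OF i2 i3] integrable_const_ivl[of "m\<^sup>2" "0::real" 1]] .
    also have "integral {0..1} (\<lambda>t::real. m\<^sup>2) = m\<^sup>2" by (simp add: integral_const_real)
    also have "integral {0..1} (\<lambda>t. (f t)\<^sup>2 - (2*m) * f t) = integral {0..1} (\<lambda>t. (f t)\<^sup>2) - integral {0..1} (\<lambda>t. (2*m) * f t)"
      by (rule integral_diff[OF i2 i3])
    also have "integral {0..1} (\<lambda>t. (2*m) * f t) = (2*m) * m" by (simp add: m_def)
    finally show ?thesis by simp
  qed
  finally show ?thesis by (simp add: m_def power2_eq_square)
qed

lemma diff_bound:
  fixes \<phi> :: "real^'n \<Rightarrow> real^'n" and J :: "real^'n \<Rightarrow> real^'n^'n"
  assumes d: "\<And>x. (\<phi> has_derivative (\<lambda>h. J x *v h)) (at x)" and cJ: "continuous_on UNIV J"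
  shows "ennreal ((norm (\<phi> (x + w) - \<phi> x))\<^sup>2) \<le> ennreal ((norm w)\<^sup>2) *
     (\<integral>\<^sup>+t. ennreal (indicator {0..1} t * (norm (J (x + t *\<^sub>R w)))\<^sup>2) \<partial>lborel)"
proof -
  define g where "g t = \<phi> (x + t *\<^sub>R w)" for t :: real
  have vd: "(g has_vector_derivative (J (x + t *\<^sub>R w) *v w)) (at t)" for t
  proof -
    have a: "((\<lambda>t. x + t *\<^sub>R w) has_derivative (\<lambda>s. s *\<^sub>R w)) (at t)"
      by (auto intro!: derivative_eq_intros)
    have "((\<phi> \<circ> (\<lambda>t. x + t *\<^sub>R w)) has_derivative ((\<lambda>h. J (x + t *\<^sub>R w) *v h) \<circ> (\<lambda>s. s *\<^sub>R w))) (at t)"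
      by (rule diff_chain_at[OF a d])
    moreover have "((\<lambda>h. J (x + t *\<^sub>R w) *v h) \<circ> (\<lambda>s. s *\<^sub>R w)) = (\<lambda>s. s *\<^sub>R (J (x + t *\<^sub>R w) *v w))"
      by (auto simp: matrix_vector_mult_scaleR)
    ultimately show ?thesis unfolding has_vector_derivative_def g_def o_def by simp
  qed
  have cJt: "continuous_on S (\<lambda>t::real. J (x + t *\<^sub>R w))" for S
    by (rule continuous_on_compose2[OF cJ]) (auto intro!: continuous_intros)
  have ftc: "((\<lambda>t. J (x + t *\<^sub>R w) *v w) has_integral (g 1 - g 0)) {0..1}"
    by (rule fundamental_theorem_of_calculus) (auto intro: has_vector_derivative_at_within vd)
  define f where "f t = norm (J (x + t *\<^sub>R w))" for t
  have cf: "continuous_on S f" for S unfolding f_def by (intro continuous_intros cJt)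
  have "norm (g 1 - g 0) \<le> integral {0..1} (\<lambda>t. f t * norm w)"
  proof -
    have "norm (integral {0..1} (\<lambda>t. J (x + t *\<^sub>R w) *v w)) \<le> integral {0..1} (\<lambda>t. f t * norm w)"
      by (rule integral_norm_bound_integral[OF has_integral_integrable[OF ftc]])
        (auto simp: f_def intro!: norm_mat_vec_le integrable_continuous_interval continuous_intros cJt)
    with ftc show ?thesis by (simp add: integral_unique)
  qed
  also have "\<dots> = integral {0..1} f * norm w" by simp
  finally have n1: "norm (g 1 - g 0) \<le> integral {0..1} f * norm w" .
  have fnn: "0 \<le> integral {0..1} f" by (rule integral_nonneg) (auto simp: f_def intro: integrable_continuous_interval cf)
  have "(norm (g 1 - g 0))\<^sup>2 \<le> (integral {0..1} f * norm w)\<^sup>2"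
    using n1 by (simp add: power_mono)
  also have "\<dots> = (integral {0..1} f)\<^sup>2 * (norm w)\<^sup>2" by (simp add: power_mult_distrib)
  also have "\<dots> \<le> integral {0..1} (\<lambda>t. (f t)\<^sup>2) * (norm w)\<^sup>2"
    by (intro mult_right_mono cs_integral01 cf) simp
  finally have n2: "(norm (g 1 - g 0))\<^sup>2 \<le> integral {0..1} (\<lambda>t. (f t)\<^sup>2) * (norm w)\<^sup>2" .
  have hi: "((\<lambda>t. indicator {0..1} t * (f t)\<^sup>2) has_integral integral {0..1} (\<lambda>t. (f t)\<^sup>2)) UNIV"
  proof -
    have "((\<lambda>t. (f t)\<^sup>2) has_integral integral {0..1} (\<lambda>t. (f t)\<^sup>2)) {0..1}"
      by (intro integrable_integral integrable_continuous_interval continuous_intros cf)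
    then have "((\<lambda>t. if t \<in> {0..1} then (f t)\<^sup>2 else 0) has_integral integral {0..1} (\<lambda>t. (f t)\<^sup>2)) UNIV"
      by (simp only: has_integral_restrict_UNIV)
    moreover have "(\<lambda>t. if t \<in> {0..1} then (f t)\<^sup>2 else 0) = (\<lambda>t. indicator {0..1} t * (f t)\<^sup>2)"
      by (auto simp: indicator_def)
    ultimately show ?thesis by simp
  qed
  have mf: "(\<lambda>t. indicator {0..1} t * (f t)\<^sup>2) \<in> borel_measurable borel"
    by (intro borel_measurable_times borel_measurable_indicator borel_measurable_power
         borel_measurable_continuous_onI cf) auto
  have "(\<integral>\<^sup>+t. ennreal (indicator {0..1} t * (f t)\<^sup>2) \<partial>lborel) = ennreal (integral {0..1} (\<lambda>t. (f t)\<^sup>2))"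
    by (rule nn_integral_has_integral_lborel[OF mf _ hi]) auto
  moreover have "ennreal ((norm (g 1 - g 0))\<^sup>2) \<le> ennreal ((norm w)\<^sup>2) * ennreal (integral {0..1} (\<lambda>t. (f t)\<^sup>2))"
    using n2 by (simp add: ennreal_mult'[symmetric] mult.commute ennreal_leI)
  ultimately show ?thesis by (simp add: g_def f_def)
qed

lemma nn_integral_translate:
  fixes f :: "'a::euclidean_space \<Rightarrow> ennreal"
  assumes [measurable]: "f \<in> borel_measurable borel"
  shows "(\<integral>\<^sup>+x. f (c + x) \<partial>lborel) = (\<integral>\<^sup>+x. f x \<partial>lborel)"
proof -
  have "(\<integral>\<^sup>+x. f x \<partial>lborel) = (\<integral>\<^sup>+x. f x \<partial>(distr lborel borel ((+) c)))"
    by (simp add: lborel_distr_plus)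
  also have "\<dots> = (\<integral>\<^sup>+x. f (c + x) \<partial>lborel)"
    by (subst nn_integral_distr) auto
  finally show ?thesis ..
qed

lemma diff_L2:
  fixes \<phi> :: "real^'n \<Rightarrow> real^'n" and J :: "real^'n \<Rightarrow> real^'n^'n"
  assumes d: "\<And>x. (\<phi> has_derivative (\<lambda>h. J x *v h)) (at x)" and cJ: "continuous_on UNIV J"
  shows "(\<integral>\<^sup>+x. ennreal ((norm (\<phi> (x + w) - \<phi> x))\<^sup>2) \<partial>lborel) \<le> ennreal ((norm w)\<^sup>2) *
     (\<integral>\<^sup>+x. ennreal ((norm (J x))\<^sup>2) \<partial>lborel)"
proof -
  have [measurable]: "J \<in> borel_measurable borel" by (rule borel_measurable_continuous_onI[OF cJ])
  define F where "F x t = ennreal (indicator {0..1} t * (norm (J (x + t *\<^sub>R w)))\<^sup>2)" for x and t :: real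
  have mF: "case_prod F \<in> borel_measurable (lborel \<Otimes>\<^sub>M lborel)"
    unfolding F_def by measurable
  have mF1: "(\<lambda>x. \<integral>\<^sup>+t. F x t \<partial>lborel) \<in> borel_measurable lborel"
    using mF unfolding F_def by measurable
  have "(\<integral>\<^sup>+x. ennreal ((norm (\<phi> (x + w) - \<phi> x))\<^sup>2) \<partial>lborel)
      \<le> (\<integral>\<^sup>+x. ennreal ((norm w)\<^sup>2) * (\<integral>\<^sup>+t. F x t \<partial>lborel) \<partial>lborel)"
    by (rule nn_integral_mono) (unfold F_def, rule diff_bound[OF d cJ])
  also have "\<dots> = ennreal ((norm w)\<^sup>2) * (\<integral>\<^sup>+x. (\<integral>\<^sup>+t. F x t \<partial>lborel) \<partial>lborel)"
    by (rule nn_integral_cmult[OF mF1])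
  also have "(\<integral>\<^sup>+x. (\<integral>\<^sup>+t. F x t \<partial>lborel) \<partial>lborel) = (\<integral>\<^sup>+t. (\<integral>\<^sup>+x. F x t \<partial>lborel) \<partial>lborel)"
    by (rule lborel_pair.Fubini'[OF mF, symmetric])
  also have "\<dots> = (\<integral>\<^sup>+t. indicator {0..1::real} t * (\<integral>\<^sup>+x. ennreal ((norm (J x))\<^sup>2) \<partial>lborel) \<partial>lborel)"
  proof (intro nn_integral_cong)
    fix t :: real
    have "(\<integral>\<^sup>+x. F x t \<partial>lborel) = (\<integral>\<^sup>+x. indicator {0..1} t * ennreal ((norm (J (t *\<^sub>R w + x)))\<^sup>2) \<partial>lborel)"
      unfolding F_def by (intro nn_integral_cong) (auto simp: indicator_def add.commute)
    also have "\<dots> = indicator {0..1} t * (\<integral>\<^sup>+x. ennreal ((norm (J (t *\<^sub>R w + x)))\<^sup>2) \<partial>lborel)"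
      by (rule nn_integral_cmult) measurable
    also have "(\<integral>\<^sup>+x. ennreal ((norm (J (t *\<^sub>R w + x)))\<^sup>2) \<partial>lborel) = (\<integral>\<^sup>+x. ennreal ((norm (J x))\<^sup>2) \<partial>lborel)"
      by (rule nn_integral_translate[of "\<lambda>x. ennreal ((norm (J x))\<^sup>2)"]) measurable
    finally show "(\<integral>\<^sup>+x. F x t \<partial>lborel) = indicator {0..1} t * (\<integral>\<^sup>+x. ennreal ((norm (J x))\<^sup>2) \<partial>lborel)" .
  qed
  also have "\<dots> = (\<integral>\<^sup>+x. ennreal ((norm (J x))\<^sup>2) \<partial>lborel)"
    by (subst nn_integral_multc) (auto simp: mult.commute)
  finally show ?thesis .
qed

lemma poincare_shift:
  fixes \<phi> :: "real^'n \<Rightarrow> real^'n" and J :: "real^'n \<Rightarrow> real^'n^'n"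
  assumes d: "\<And>x. (\<phi> has_derivative (\<lambda>h. J x *v h)) (at x)" and cJ: "continuous_on UNIV J"
    and W: "W \<in> sets lborel" and Wb: "\<And>w. w \<in> W \<Longrightarrow> norm w \<le> R"
    and S: "\<And>x. S x \<in> sets lborel" "\<And>x. S x \<subseteq> W" "\<And>x. m \<le> emeasure lborel (S x)"
      "\<And>x w. w \<in> S x \<Longrightarrow> \<phi> (x + w) = 0"
  shows "m * (\<integral>\<^sup>+x. ennreal ((norm (\<phi> x))\<^sup>2) \<partial>lborel)
     \<le> emeasure lborel W * ennreal (R\<^sup>2) * (\<integral>\<^sup>+x. ennreal ((norm (J x))\<^sup>2) \<partial>lborel)"
proof -
  have cphi: "continuous_on UNIV \<phi>"
    using d has_derivative_continuous continuous_at_imp_continuous_on by blast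
  have [measurable]: "\<phi> \<in> borel_measurable borel" by (rule borel_measurable_continuous_onI[OF cphi])
  have [measurable]: "W \<in> sets borel" using W by simp
  define G where "G x w = indicator W w * ennreal ((norm (\<phi> (x + w) - \<phi> x))\<^sup>2)" for x w
  have mG: "case_prod G \<in> borel_measurable (lborel \<Otimes>\<^sub>M lborel)"
    unfolding G_def by measurable
  have pw: "m * ennreal ((norm (\<phi> x))\<^sup>2) \<le> (\<integral>\<^sup>+w. G x w \<partial>lborel)" for x
  proof -
    have "m * ennreal ((norm (\<phi> x))\<^sup>2) \<le> emeasure lborel (S x) * ennreal ((norm (\<phi> x))\<^sup>2)"
      by (intro mult_right_mono S(3)) simp
    also have "\<dots> = (\<integral>\<^sup>+w. ennreal ((norm (\<phi> x))\<^sup>2) * indicator (S x) w \<partial>lborel)"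
      by (subst nn_integral_cmult_indicator[OF S(1)]) (simp add: mult.commute)
    also have "\<dots> \<le> (\<integral>\<^sup>+w. G x w \<partial>lborel)"
    proof (intro nn_integral_mono)
      fix w
      show "ennreal ((norm (\<phi> x))\<^sup>2) * indicator (S x) w \<le> G x w"
      proof (cases "w \<in> S x")
        case True
        then have "w \<in> W" using S(2) by blast
        then show ?thesis using True S(4)[OF True] by (simp add: G_def)
      qed (simp add: G_def)
    qed
    finally show ?thesis .
  qed
  have "m * (\<integral>\<^sup>+x. ennreal ((norm (\<phi> x))\<^sup>2) \<partial>lborel) = (\<integral>\<^sup>+x. m * ennreal ((norm (\<phi> x))\<^sup>2) \<partial>lborel)"
    by (rule nn_integral_cmult[symmetric]) measurable
  also have "\<dots> \<le> (\<integral>\<^sup>+x. (\<integral>\<^sup>+w. G x w \<partial>lborel) \<partial>lborel)"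
    by (rule nn_integral_mono) (rule pw)
  also have "\<dots> = (\<integral>\<^sup>+w. (\<integral>\<^sup>+x. G x w \<partial>lborel) \<partial>lborel)"
    by (rule lborel_pair.Fubini'[OF mG, symmetric])
  also have "\<dots> \<le> (\<integral>\<^sup>+w. (ennreal (R\<^sup>2) * (\<integral>\<^sup>+x. ennreal ((norm (J x))\<^sup>2) \<partial>lborel)) * indicator W w \<partial>lborel)"
  proof (intro nn_integral_mono)
    fix w
    show "(\<integral>\<^sup>+x. G x w \<partial>lborel) \<le> (ennreal (R\<^sup>2) * (\<integral>\<^sup>+x. ennreal ((norm (J x))\<^sup>2) \<partial>lborel)) * indicator W w"
    proof (cases "w \<in> W")
      case True
      have "(\<integral>\<^sup>+x. G x w \<partial>lborel) = (\<integral>\<^sup>+x. ennreal ((norm (\<phi> (x + w) - \<phi> x))\<^sup>2) \<partial>lborel)"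
        using True by (simp add: G_def)
      also have "\<dots> \<le> ennreal ((norm w)\<^sup>2) * (\<integral>\<^sup>+x. ennreal ((norm (J x))\<^sup>2) \<partial>lborel)"
        by (rule diff_L2[OF d cJ])
      also have "\<dots> \<le> ennreal (R\<^sup>2) * (\<integral>\<^sup>+x. ennreal ((norm (J x))\<^sup>2) \<partial>lborel)"
        using Wb[OF True] by (intro mult_right_mono ennreal_leI power_mono) auto
      finally show ?thesis using True by simp
    qed (simp add: G_def)
  qed
  also have "\<dots> = emeasure lborel W * ennreal (R\<^sup>2) * (\<integral>\<^sup>+x. ennreal ((norm (J x))\<^sup>2) \<partial>lborel)"
    by (subst nn_integral_cmult_indicator[OF W]) (simp add: mult_ac)
  finally show ?thesis .
qed

lemma emeasure_cbox_cart:
  fixes p q :: "real^'n"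
  assumes "\<forall>i. p$i \<le> q$i"
  shows "emeasure lborel (cbox p q) = ennreal (\<Prod>i\<in>UNIV. q$i - p$i)"
proof -
  have "p \<in> cbox p q" using assms by (auto simp: mem_box_cart)
  then have ne: "cbox p q \<noteq> {}" by blast
  then have "emeasure lborel (cbox p q) = ennreal (Henstock_Kurzweil_Integration.content (cbox p q))"
    using ne by (simp only: emeasure_lborel_cbox_eq content_cbox_if) (simp add: box_ne_empty inner_diff_left)
  then show ?thesis using content_cbox_cart[OF ne] by simp
qed

lemma J_zero_outside:
  fixes \<phi> :: "real^'n \<Rightarrow> real^'n" and J :: "real^'n \<Rightarrow> real^'n^'n"
  assumes d: "(\<phi> has_derivative (\<lambda>h. J x *v h)) (at x)" and K: "closed K" "x \<notin> K"
    and z: "\<And>y. y \<notin> K \<Longrightarrow> \<phi> y = 0"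
  shows "J x = 0"
proof -
  have "((\<lambda>_. 0) has_derivative (\<lambda>h. 0)) (at x)" by simp
  then have "(\<phi> has_derivative (\<lambda>h. 0)) (at x)"
    by (rule has_derivative_transform_within_open[where s="- K"]) (use K z in auto)
  then have "(\<lambda>h. J x *v h) = (\<lambda>h. 0)" by (rule has_derivative_unique[OF d])
  then show ?thesis by (simp add: matrix_eq fun_eq_iff)
qed

definition Kc :: "real^'n \<Rightarrow> real^'n \<Rightarrow> real^'n \<Rightarrow> real" where
  "Kc z0 a b = (\<Prod>i\<in>UNIV. 2 * z0$i) * (\<Sum>i\<in>UNIV. z0$i)\<^sup>2 / (\<Prod>i\<in>UNIV. b$i - a$i)"

lemma int_U_eq:
  fixes f :: "real^'n \<Rightarrow> 'b::real_normed_vector"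
  assumes U: "U \<in> sets lebesgue" and z: "\<And>x. x \<notin> U \<Longrightarrow> f x = 0"
  shows "(\<integral>\<^sup>+x. ennreal ((norm (f x))\<^sup>2) \<partial>lebesgue_on U) = (\<integral>\<^sup>+x. ennreal ((norm (f x))\<^sup>2) \<partial>lborel)"
proof -
  have "(\<integral>\<^sup>+x. ennreal ((norm (f x))\<^sup>2) \<partial>lebesgue_on U)
     = (\<integral>\<^sup>+x. ennreal ((norm (f x))\<^sup>2) * indicator U x \<partial>lebesgue)"
    by (rule nn_integral_restrict_space) (use U in simp)
  also have "\<dots> = (\<integral>\<^sup>+x. ennreal ((norm (f x))\<^sup>2) * indicator U x \<partial>lborel)"
    by (rule nn_integral_completion)
  also have "\<dots> = (\<integral>\<^sup>+x. ennreal ((norm (f x))\<^sup>2) \<partial>lborel)"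
    by (rule nn_integral_cong) (auto simp: indicator_def z)
  finally show ?thesis .
qed

lemma per_test:
  fixes \<phi> :: "real^'n \<Rightarrow> real^'n" and J :: "real^'n \<Rightarrow> real^'n^'n"
    and a b z0 :: "real^'n" and h :: real
  assumes T: "C1c_test U \<phi> J" and U: "U \<in> sets lebesgue" and h: "0 < h"
    and a0: "\<And>i. 0 < a$i" and ab: "\<And>i. a$i < b$i" and bz: "\<And>i. b$i < z0$i"
    and hole: "\<And>l y. y \<in> cellset h l z0 (cbox a b) \<Longrightarrow> y \<notin> U"
  shows "(\<integral>\<^sup>+x. ennreal ((norm (\<phi> x))\<^sup>2) \<partial>lebesgue_on U)
     \<le> ennreal (Kc z0 a b * h\<^sup>2) * (\<integral>\<^sup>+x. ennreal ((norm (J x))\<^sup>2) \<partial>lebesgue_on U)"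
proof -
  obtain K where d: "\<And>x. (\<phi> has_derivative (\<lambda>h. J x *v h)) (at x)" and cJ: "continuous_on UNIV J"
    and K: "compact K" "K \<subseteq> U" and z: "\<And>x. x \<notin> K \<Longrightarrow> \<phi> x = 0"
    using T unfolding C1c_test_def by blast
  have Jz: "J x = 0" if "x \<notin> K" for x
    by (rule J_zero_outside[where \<phi>=\<phi> and J=J and K=K and x=x]) (use d compact_imp_closed[OF K(1)] that z in auto)
  have e1: "(\<integral>\<^sup>+x. ennreal ((norm (\<phi> x))\<^sup>2) \<partial>lebesgue_on U) = (\<integral>\<^sup>+x. ennreal ((norm (\<phi> x))\<^sup>2) \<partial>lborel)"
    by (rule int_U_eq[OF U]) (use K z in auto)
  have e2: "(\<integral>\<^sup>+x. ennreal ((norm (J x))\<^sup>2) \<partial>lebesgue_on U) = (\<integral>\<^sup>+x. ennreal ((norm (J x))\<^sup>2) \<partial>lborel)"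
    by (rule int_U_eq[OF U]) (use K Jz in auto)
  have z0: "0 < z0$i" for i using a0[of i] ab[of i] bz[of i] by linarith
  define W where "W = cbox (-(h *\<^sub>R z0)) (h *\<^sub>R z0)"
  define R where "R = h * (\<Sum>i\<in>UNIV. z0$i)"
  define P where "P = (\<Prod>i\<in>UNIV. b$i - a$i)"
  define Q where "Q = (\<Prod>i\<in>UNIV. 2 * z0$i)"
  define l where "l x = (\<lambda>i. \<lfloor>x$i / (h * z0$i)\<rfloor>)" for x :: "real^'n"
  define S where "S x = cbox (h *\<^sub>R (lat (l x) z0 + a) - x) (h *\<^sub>R (lat (l x) z0 + b) - x)" for x
  have P0: "0 < P" unfolding P_def using ab by (intro prod_pos) (auto simp: algebra_simps)
  have Wb: "norm w \<le> R" if "w \<in> W" for w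
  proof -
    have "norm w \<le> (\<Sum>i\<in>UNIV. \<bar>w$i\<bar>)" by (rule norm_le_l1_cart)
    also have "\<dots> \<le> (\<Sum>i\<in>UNIV. h * z0$i)"
    proof (intro sum_mono)
      fix i
      have "- (h * z0 $ i) \<le> w $ i \<and> w $ i \<le> h * z0 $ i" using that by (auto simp: W_def mem_box_cart)
      then show "\<bar>w$i\<bar> \<le> h * z0$i" by (simp add: abs_le_iff)
    qed
    finally show ?thesis by (simp add: R_def sum_distrib_left)
  qed
  have fl: "real_of_int (l x i) * (h * z0$i) \<le> x$i" "x$i < (real_of_int (l x i) + 1) * (h * z0$i)" for x i
    unfolding l_def using h z0[of i] by (auto intro: floor_divide_lower floor_divide_upper)
  have SW: "S x \<subseteq> W" for x
  proof
    fix w assume "w \<in> S x"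
    then have w: "h * (real_of_int (l x i) * z0$i + a$i) - x$i \<le> w$i"
       "w$i \<le> h * (real_of_int (l x i) * z0$i + b$i) - x$i" for i
      by (auto simp: S_def mem_box_cart lat_def)
    show "w \<in> W" unfolding W_def mem_box_cart
    proof (intro allI conjI)
      fix i
      have "h * a$i > 0" using h a0[of i] by simp
      then show "(- (h *\<^sub>R z0)) $ i \<le> w $ i" using w(1)[of i] fl(2)[of x i] by (simp add: algebra_simps)
      have "h * b$i \<le> h * z0$i" using h bz[of i] by simp
      then show "w $ i \<le> (h *\<^sub>R z0) $ i" using w(2)[of i] fl(1)[of x i] by (simp add: algebra_simps)
    qed
  qed
  have Sm: "ennreal (h ^ CARD('n) * P) \<le> emeasure lborel (S x)" for x
  proof -
    have "emeasure lborel (S x) = ennreal (\<Prod>i\<in>UNIV. h * (b$i - a$i))"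
      unfolding S_def using ab h
      by (subst emeasure_cbox_cart) (auto simp: lat_def algebra_simps less_imp_le)
    also have "(\<Prod>i\<in>UNIV. h * (b$i - a$i)) = h ^ CARD('n) * P"
      by (simp add: P_def prod.distrib)
    finally show ?thesis by simp
  qed
  have S0: "\<phi> (x + w) = 0" if "w \<in> S x" for x w
  proof -
    define a' where "a' = (1/h) *\<^sub>R (x + w) - lat (l x) z0"
    have w: "h * (real_of_int (l x i) * z0$i + a$i) - x$i \<le> w$i"
       "w$i \<le> h * (real_of_int (l x i) * z0$i + b$i) - x$i" for i
      using that by (auto simp: S_def mem_box_cart lat_def)
    have "a' \<in> cbox a b" unfolding mem_box_cart a'_def
    proof (intro allI conjI)
      fix i
      show "a$i \<le> ((1/h) *\<^sub>R (x + w) - lat (l x) z0) $ i"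
        using w(1)[of i] h by (simp add: lat_def field_simps)
      show "((1/h) *\<^sub>R (x + w) - lat (l x) z0) $ i \<le> b$i"
        using w(2)[of i] h by (simp add: lat_def field_simps)
    qed
    moreover have "x + w = h *\<^sub>R (lat (l x) z0 + a')" using h by (simp add: a'_def)
    ultimately have "x + w \<in> cellset h (l x) z0 (cbox a b)" unfolding cellset_def by blast
    then have "x + w \<notin> K" using hole K(2) by blast
    then show ?thesis by (rule z)
  qed
  have Wm: "emeasure lborel W = ennreal (h ^ CARD('n) * Q)"
  proof -
    have "emeasure lborel W = ennreal (\<Prod>i\<in>UNIV. h * (2 * z0$i))"
      unfolding W_def using h z0
      by (subst emeasure_cbox_cart) (auto simp: algebra_simps less_imp_le)
    also have "(\<Prod>i\<in>UNIV. h * (2 * z0$i)) = h ^ CARD('n) * Q"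
      by (simp add: Q_def prod.distrib)
    finally show ?thesis .
  qed
  have main: "ennreal (h ^ CARD('n) * P) * (\<integral>\<^sup>+x. ennreal ((norm (\<phi> x))\<^sup>2) \<partial>lborel)
     \<le> emeasure lborel W * ennreal (R\<^sup>2) * (\<integral>\<^sup>+x. ennreal ((norm (J x))\<^sup>2) \<partial>lborel)"
  proof -
    have Ws: "W \<in> sets lborel" by (simp add: W_def)
    have Ss: "S x \<in> sets lborel" for x by (simp add: S_def)
    show ?thesis by (rule poincare_shift[OF d cJ Ws Wb Ss SW Sm S0])
  qed
  have "emeasure lborel W * ennreal (R\<^sup>2) = ennreal (h ^ CARD('n) * P) * ennreal (Kc z0 a b * h\<^sup>2)"
  proof -
    have "h ^ CARD('n) * Q * R\<^sup>2 = h ^ CARD('n) * P * (Kc z0 a b * h\<^sup>2)"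
    proof -
      have "Kc z0 a b = Q * (\<Sum>i\<in>UNIV. z0$i)\<^sup>2 / P" by (simp add: Kc_def Q_def P_def)
      then show ?thesis using P0 by (simp add: R_def field_simps power2_eq_square)
    qed
    moreover have "0 \<le> h ^ CARD('n) * Q" unfolding Q_def using h z0 by (intro mult_nonneg_nonneg prod_nonneg) (auto simp: less_imp_le)
    moreover have "0 \<le> h ^ CARD('n) * P" using P0 h by simp
    ultimately show ?thesis unfolding Wm
      by (metis ennreal_mult')
  qed
  with main have "ennreal (h ^ CARD('n) * P) * (\<integral>\<^sup>+x. ennreal ((norm (\<phi> x))\<^sup>2) \<partial>lborel)
     \<le> ennreal (h ^ CARD('n) * P) * (ennreal (Kc z0 a b * h\<^sup>2) * (\<integral>\<^sup>+x. ennreal ((norm (J x))\<^sup>2) \<partial>lborel))"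
    by (simp add: mult.assoc)
  then have "(\<integral>\<^sup>+x. ennreal ((norm (\<phi> x))\<^sup>2) \<partial>lborel) \<le> ennreal (Kc z0 a b * h\<^sup>2) * (\<integral>\<^sup>+x. ennreal ((norm (J x))\<^sup>2) \<partial>lborel)"
    using P0 h by (subst (asm) ennreal_mult_le_mult_iff) auto
  then show ?thesis using e1 e2 by simp
qed

lemma J_finite:
  fixes \<phi> :: "real^'n \<Rightarrow> real^'n" and J :: "real^'n \<Rightarrow> real^'n^'n"
  assumes T: "C1c_test U \<phi> J" and U: "U \<in> sets lebesgue"
  shows "(\<integral>\<^sup>+x. ennreal ((norm (J x))\<^sup>2) \<partial>lebesgue_on U) < \<infinity>"
proof -
  obtain K where d: "\<And>x. (\<phi> has_derivative (\<lambda>h. J x *v h)) (at x)" and cJ: "continuous_on UNIV J"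
    and K: "compact K" "K \<subseteq> U" and z: "\<And>x. x \<notin> K \<Longrightarrow> \<phi> x = 0"
    using T unfolding C1c_test_def by blast
  have Jz: "J x = 0" if "x \<notin> K" for x
    by (rule J_zero_outside[where \<phi>=\<phi> and J=J and K=K and x=x]) (use d compact_imp_closed[OF K(1)] that z in auto)
  have "compact (J ` K)" by (rule compact_continuous_image[OF continuous_on_subset[OF cJ] K(1)]) simp
  then obtain B where B: "\<And>x. x \<in> K \<Longrightarrow> norm (J x) \<le> B"
    using compact_imp_bounded bounded_iff by (metis imageI)
  have [measurable]: "K \<in> sets borel" using K(1) by (simp add: borel_compact)
  have "(\<integral>\<^sup>+x. ennreal ((norm (J x))\<^sup>2) \<partial>lebesgue_on U) = (\<integral>\<^sup>+x. ennreal ((norm (J x))\<^sup>2) \<partial>lborel)"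
    by (rule int_U_eq[OF U]) (use K Jz in auto)
  also have "\<dots> \<le> (\<integral>\<^sup>+x. ennreal (B\<^sup>2) * indicator K x \<partial>lborel)"
  proof (intro nn_integral_mono)
    fix x show "ennreal ((norm (J x))\<^sup>2) \<le> ennreal (B\<^sup>2) * indicator K x"
      using B[of x] Jz[of x] by (cases "x \<in> K") (auto intro!: ennreal_leI power_mono)
  qed
  also have "\<dots> = ennreal (B\<^sup>2) * emeasure lborel K" by (rule nn_integral_cmult_indicator) simp
  also have "\<dots> < \<infinity>" using emeasure_compact_finite[OF K(1)] by (simp add: ennreal_mult_less_top)
  finally show ?thesis .
qed

lemma sq_tri:
  fixes u w :: "'a::real_normed_vector"
  shows "ennreal ((norm u)\<^sup>2) \<le> 2 * ennreal ((norm w)\<^sup>2) + 2 * ennreal ((norm (w - u))\<^sup>2)"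
proof -
  define p where "p = norm w"
  define q where "q = norm (w - u)"
  have t: "norm u \<le> p + q" using norm_triangle_sub[of u w] by (simp add: norm_minus_commute p_def q_def)
  have "(norm u)\<^sup>2 \<le> (p + q)\<^sup>2" using t by (intro power_mono) auto
  also have "\<dots> \<le> 2 * p\<^sup>2 + 2 * q\<^sup>2"
  proof -
    have "0 \<le> (p - q)\<^sup>2" by simp
    then show ?thesis by (simp add: power2_eq_square algebra_simps)
  qed
  finally have "ennreal ((norm u)\<^sup>2) \<le> ennreal (2 * p\<^sup>2 + 2 * q\<^sup>2)" by (rule ennreal_leI)
  also have "ennreal (2 * p\<^sup>2 + 2 * q\<^sup>2) = ennreal (2 * p\<^sup>2) + ennreal (2 * q\<^sup>2)"
    by (rule ennreal_plus) auto
  also have "ennreal (2 * p\<^sup>2) = 2 * ennreal (p\<^sup>2)" by (simp add: ennreal_mult)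
  also have "ennreal (2 * q\<^sup>2) = 2 * ennreal (q\<^sup>2)" by (simp add: ennreal_mult)
  finally show ?thesis by (simp add: p_def q_def)
qed
lemma int_tri:
  fixes f g :: "'b \<Rightarrow> 'a::euclidean_space"
  assumes [measurable]: "f \<in> borel_measurable M" "g \<in> borel_measurable M"
  shows "(\<integral>\<^sup>+x. ennreal ((norm (g x))\<^sup>2) \<partial>M) \<le> 2 * (\<integral>\<^sup>+x. ennreal ((norm (f x))\<^sup>2) \<partial>M) + 2 * (\<integral>\<^sup>+x. ennreal ((norm (f x - g x))\<^sup>2) \<partial>M)"
proof -
  have "(\<integral>\<^sup>+x. ennreal ((norm (g x))\<^sup>2) \<partial>M) \<le> (\<integral>\<^sup>+x. 2 * ennreal ((norm (f x))\<^sup>2) + 2 * ennreal ((norm (f x - g x))\<^sup>2) \<partial>M)"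
    by (intro nn_integral_mono sq_tri)
  also have "\<dots> = (\<integral>\<^sup>+x. 2 * ennreal ((norm (f x))\<^sup>2) \<partial>M) + (\<integral>\<^sup>+x. 2 * ennreal ((norm (f x - g x))\<^sup>2) \<partial>M)"
    by (rule nn_integral_add) measurable
  also have "\<dots> = 2 * (\<integral>\<^sup>+x. ennreal ((norm (f x))\<^sup>2) \<partial>M) + 2 * (\<integral>\<^sup>+x. ennreal ((norm (f x - g x))\<^sup>2) \<partial>M)"
    by (simp add: nn_integral_cmult)
  finally show ?thesis .
qed

lemma perforated_sets:
  assumes "open \<Omega>" "compact Ys" "compact Zs"
  shows "perforated \<Omega> y0 Ys z0 Zs e d \<in> sets lebesgue"
proof -
  have c: "cellset s k p A \<in> sets borel" if "compact A" for s k p and A :: "(real^'n) set"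
  proof -
    have "compact (cellset s k p A)" unfolding cellset_def
      by (intro compact_continuous_image that continuous_intros)
    then show ?thesis by (simp add: borel_compact)
  qed
  have "(\<Union>k. cellset e k y0 Ys) \<in> sets borel" using c assms(2) by (intro sets.countable_UN) auto
  moreover have "(\<Union>l. cellset (e * d) l z0 Zs) \<in> sets borel" using c assms(3) by (intro sets.countable_UN) auto
  moreover have "\<Omega> \<in> sets borel" using assms(1) by simp
  ultimately have "perforated \<Omega> y0 Ys z0 Zs e d \<in> sets borel" unfolding perforated_def by (intro sets.Diff)
  then show ?thesis by simp
qed


theorem proposition3:
  fixes \<Omega> :: "(real^'n) set" and y0 z0 :: "real^'n" and Ys Zs :: "(real^'n) set"
    and \<delta> :: "real \<Rightarrow> real"
  assumes dim: "CARD('n) = 2 \<or> CARD('n) = 3"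
    and \<Omega>: "bounded \<Omega>" "open \<Omega>" "lipschitz_boundary \<Omega>"
    and y0: "\<forall>i. 0 < y0 $ i" and z0: "\<forall>i. 0 < z0 $ i"
    and Ys: "Ys \<subseteq> box 0 y0" "closed_lipschitz Ys"
    and Zs: "Zs \<subseteq> box 0 z0" "closed_lipschitz Zs"
    and \<delta>: "\<forall>\<epsilon>. 0 < \<epsilon> \<and> \<epsilon> < 1 \<longrightarrow> 0 < \<delta> \<epsilon> \<and> \<delta> \<epsilon> < \<epsilon>"
    and \<delta>0: "(\<delta> \<longlongrightarrow> 0) (at_right 0)"
  shows "\<exists>C>0. \<forall>\<epsilon>. 0 < \<epsilon> \<and> \<epsilon> < 1
           \<and> (\<exists>L. finite L \<and> cbox 0 y0 = (\<Union>l\<in>L. cellset (\<delta> \<epsilon>) l z0 (cbox 0 z0)))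
           \<and> (\<exists>L. finite L \<and> Ys = (\<Union>l\<in>L. cellset (\<delta> \<epsilon>) l z0 (cbox 0 z0)))
           \<and> (\<exists>K. finite K \<and> closure \<Omega> = (\<Union>k\<in>K. cellset \<epsilon> k y0 (cbox 0 y0)))
         \<longrightarrow> (\<forall>v G. H01 (perforated \<Omega> y0 Ys z0 Zs \<epsilon> (\<delta> \<epsilon>)) v G \<longrightarrow>
               L2norm (perforated \<Omega> y0 Ys z0 Zs \<epsilon> (\<delta> \<epsilon>)) v
                 \<le> C * \<epsilon> * \<delta> \<epsilon> * L2norm (perforated \<Omega> y0 Ys z0 Zs \<epsilon> (\<delta> \<epsilon>)) G)"
proof -
  obtain c where "c \<in> interior Zs" using Zs(2) unfolding closed_lipschitz_def by blast
  then obtain a b where ab: "cbox a b \<subseteq> interior Zs" "\<forall>i\<in>Basis. a \<bullet> i < b \<bullet> i"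
    using open_contains_cbox[of "interior Zs" c] by (metis open_interior)
  have abi: "a$i < b$i" for i
    using ab(2)[rule_format, of "axis i 1"] by (simp add: cart_eq_inner_axis)
  have sub: "cbox a b \<subseteq> Zs" using ab(1) interior_subset by blast
  have "a \<in> cbox a b" "b \<in> cbox a b" using abi by (auto simp: mem_box_cart less_imp_le)
  then have "a \<in> box 0 z0" "b \<in> box 0 z0" using sub Zs(1) by auto
  then have a0: "0 < a$i" and bz: "b$i < z0$i" for i by (auto simp: mem_box_cart)
  have Ysc: "compact Ys" using Ys unfolding closed_lipschitz_def
    by (meson bounded_box bounded_subset compact_eq_bounded_closed)
  have Zsc: "compact Zs" using Zs unfolding closed_lipschitz_def
    by (meson bounded_box bounded_subset compact_eq_bounded_closed)
  define K where "K = Kc z0 a b"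
  have K0: "0 < K" unfolding K_def Kc_def using abi z0
    by (intro divide_pos_pos mult_pos_pos prod_pos sum_pos zero_less_power) (auto simp: algebra_simps)
  define C where "C = 2 * sqrt K"
  have C0: "0 < C" using K0 by (simp add: C_def)
  show ?thesis
  proof (intro exI[of _ C] conjI allI impI C0)
    fix \<epsilon> v G
    assume hyp: "0 < \<epsilon> \<and> \<epsilon> < 1
           \<and> (\<exists>L. finite L \<and> cbox 0 y0 = (\<Union>l\<in>L. cellset (\<delta> \<epsilon>) l z0 (cbox 0 z0)))
           \<and> (\<exists>L. finite L \<and> Ys = (\<Union>l\<in>L. cellset (\<delta> \<epsilon>) l z0 (cbox 0 z0)))
           \<and> (\<exists>K. finite K \<and> closure \<Omega> = (\<Union>k\<in>K. cellset \<epsilon> k y0 (cbox 0 y0)))"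
    define h where "h = \<epsilon> * \<delta> \<epsilon>"
    have h0: "0 < h" using hyp \<delta> by (simp add: h_def)
    define U where "U = perforated \<Omega> y0 Ys z0 Zs \<epsilon> (\<delta> \<epsilon>)"
    assume H: "H01 U v G"
    have U: "U \<in> sets lebesgue" unfolding U_def by (rule perforated_sets[OF \<Omega>(2) Ysc Zsc])
    have hole: "y \<notin> U" if "y \<in> cellset h l z0 (cbox a b)" for l y
    proof -
      have "y \<in> cellset h l z0 Zs" using that sub unfolding cellset_def by blast
      then show ?thesis unfolding U_def perforated_def h_def by blast
    qed
    have H': "v \<in> borel_measurable (lebesgue_on U) \<and> G \<in> borel_measurable (lebesgue_on U) \<and>
     (\<exists>\<phi> J. (\<forall>k. C1c_test U (\<phi> k) (J k)) \<and>
        (\<lambda>k. \<integral>\<^sup>+ x. ennreal ((norm (\<phi> k x - v x))\<^sup>2) \<partial>(lebesgue_on U)) \<longlonglongrightarrow> 0 \<and>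
        (\<lambda>k. \<integral>\<^sup>+ x. ennreal ((norm (J k x - G x))\<^sup>2) \<partial>(lebesgue_on U)) \<longlonglongrightarrow> 0)"
      using H unfolding H01_def .
    then have mv: "v \<in> borel_measurable (lebesgue_on U)" and mG: "G \<in> borel_measurable (lebesgue_on U)"
      by (rule conjunct1, meson conjunct1 conjunct2)
    from H'[THEN conjunct2, THEN conjunct2] obtain \<phi> J where
      PJ: "(\<forall>k. C1c_test U (\<phi> k) (J k)) \<and>
        (\<lambda>k. \<integral>\<^sup>+ x. ennreal ((norm (\<phi> k x - v x))\<^sup>2) \<partial>(lebesgue_on U)) \<longlonglongrightarrow> 0 \<and>
        (\<lambda>k. \<integral>\<^sup>+ x. ennreal ((norm (J k x - G x))\<^sup>2) \<partial>(lebesgue_on U)) \<longlonglongrightarrow> 0"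
      by (elim exE)
    have T: "\<And>k. C1c_test U (\<phi> k) (J k)" using PJ by (elim conjE) (rule spec)
    have lim1: "(\<lambda>k. \<integral>\<^sup>+ x. ennreal ((norm (\<phi> k x - v x))\<^sup>2) \<partial>(lebesgue_on U)) \<longlonglongrightarrow> 0"
      using PJ by (elim conjE)
    have lim2: "(\<lambda>k. \<integral>\<^sup>+ x. ennreal ((norm (J k x - G x))\<^sup>2) \<partial>(lebesgue_on U)) \<longlonglongrightarrow> 0"
      using PJ by (elim conjE)
    have cphi: "continuous_on UNIV (\<phi> k)" for k
    proof -
      have "\<And>x. (\<phi> k has_derivative (\<lambda>h. J k x *v h)) (at x)" using T[of k] unfolding C1c_test_def by blast
      then have "\<forall>x\<in>UNIV. isCont (\<phi> k) x" using has_derivative_continuous by blast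
      then show ?thesis by (rule continuous_at_imp_continuous_on)
    qed
    have mphi: "\<phi> k \<in> borel_measurable (lebesgue_on U)" for k
      by (rule continuous_imp_measurable_on_sets_lebesgue[OF continuous_on_subset[OF cphi] U]) simp
    have mJ: "J k \<in> borel_measurable (lebesgue_on U)" for k
      using T[of k] unfolding C1c_test_def
      by (intro continuous_imp_measurable_on_sets_lebesgue[OF continuous_on_subset U]) auto
    define Iv where "Iv = (\<integral>\<^sup>+x. ennreal ((norm (v x))\<^sup>2) \<partial>lebesgue_on U)"
    define IG where "IG = (\<integral>\<^sup>+x. ennreal ((norm (G x))\<^sup>2) \<partial>lebesgue_on U)"
    define Ip where "Ip k = (\<integral>\<^sup>+x. ennreal ((norm (\<phi> k x))\<^sup>2) \<partial>lebesgue_on U)" for k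
    define IJ where "IJ k = (\<integral>\<^sup>+x. ennreal ((norm (J k x))\<^sup>2) \<partial>lebesgue_on U)" for k
    define e where "e k = (\<integral>\<^sup>+ x. ennreal ((norm (\<phi> k x - v x))\<^sup>2) \<partial>(lebesgue_on U))" for k
    define d where "d k = (\<integral>\<^sup>+ x. ennreal ((norm (J k x - G x))\<^sup>2) \<partial>(lebesgue_on U))" for k
    define c where "c = ennreal (K * h\<^sup>2)"
    define c' where "c' = ennreal (4 * K * h\<^sup>2)"
    have per: "Ip k \<le> c * IJ k" for k
      unfolding Ip_def IJ_def c_def K_def by (rule per_test[OF T U h0 a0 abi bz hole])
    have t1: "Iv \<le> 2 * Ip k + 2 * e k" for k
      unfolding Iv_def Ip_def e_def by (rule int_tri[OF mphi mv])
    have t2: "IJ k \<le> 2 * IG + 2 * d k" for k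
    proof -
      have "IJ k \<le> 2 * IG + 2 * (\<integral>\<^sup>+x. ennreal ((norm (G x - J k x))\<^sup>2) \<partial>lebesgue_on U)"
        unfolding IJ_def IG_def by (rule int_tri[OF mG mJ])
      then show ?thesis by (simp add: d_def norm_minus_commute)
    qed
    have t3: "IG \<le> 2 * IJ k + 2 * d k" for k
      unfolding IG_def IJ_def d_def by (rule int_tri[OF mJ mG])
    have cc: "2 * c * 2 = c'"
    proof -
      have "c' = ennreal 4 * c" unfolding c'_def c_def by (subst ennreal_mult'[symmetric]) (auto simp: mult.assoc)
      moreover have "(2::ennreal) * c * 2 = 4 * c" by (simp add: mult_ac)
      ultimately show ?thesis by simp
    qed
    have bound: "Iv \<le> c' * IG + (c' * d k + 2 * e k)" for k
    proof -
      have "Iv \<le> 2 * (c * IJ k) + 2 * e k" using t1[of k] per[of k]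
        by (meson add_mono_thms_linordered_semiring(3) mult_left_mono order.trans zero_le)
      also have "\<dots> \<le> 2 * (c * (2 * IG + 2 * d k)) + 2 * e k"
        using t2[of k] by (intro add_mono mult_left_mono) auto
      also have "\<dots> = (2 * c * 2) * IG + ((2 * c * 2) * d k + 2 * e k)"
        by (simp add: algebra_simps)
      finally show ?thesis unfolding cc .
    qed
    have lim: "(\<lambda>k. c' * IG + (c' * d k + 2 * e k)) \<longlonglongrightarrow> c' * IG + (c' * 0 + 2 * 0)"
      unfolding c'_def
      by (intro tendsto_add tendsto_const ennreal_tendsto_cmult lim1[folded e_def] lim2[folded d_def]) auto
    have Iv: "Iv \<le> c' * IG"
      using LIMSEQ_le_const[OF lim] bound by auto
    have IGfin: "IG < \<infinity>"
    proof -
      have "\<forall>\<^sub>F k in sequentially. d k < 1"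
        using lim2[folded d_def] by (rule order_tendstoD(2)) simp
      then obtain k where dk: "d k < 1" by (meson eventually_sequentially order.refl)
      have "IJ k < \<infinity>" unfolding IJ_def by (rule J_finite[OF T U])
      then have "2 * IJ k + 2 * d k < \<infinity>" using dk
        by (simp add: ennreal_mult_less_top)
           (metis ennreal_mult_less_top dual_order.strict_trans ennreal_less_top ennreal_numeral infinity_ennreal_def top_greatest order.not_eq_order_implies_strict)
      then show ?thesis using t3[of k] by (meson order.strict_trans1)
    qed
    have L2v: "L2norm U v = sqrt (enn2real (Iv))"
      unfolding L2norm_def Iv_def using mv by (subst integral_eq_nn_integral) auto
    have L2G: "L2norm U G = sqrt (enn2real (IG))"
      unfolding L2norm_def IG_def using mG by (subst integral_eq_nn_integral) auto
    have "enn2real (Iv) \<le> enn2real (c' * IG)"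
      using Iv IGfin by (intro enn2real_mono) (auto simp: c'_def ennreal_mult_less_top)
    also have "\<dots> = 4 * K * h\<^sup>2 * enn2real (IG)"
      using K0 by (simp add: c'_def enn2real_mult)
    finally have "sqrt (enn2real (Iv)) \<le> sqrt (4 * K * h\<^sup>2 * enn2real (IG))" by simp
    also have "\<dots> = C * h * sqrt (enn2real (IG))"
      using h0 K0 by (simp add: C_def real_sqrt_mult)
    finally show "L2norm (perforated \<Omega> y0 Ys z0 Zs \<epsilon> (\<delta> \<epsilon>)) v
                 \<le> C * \<epsilon> * \<delta> \<epsilon> * L2norm (perforated \<Omega> y0 Ys z0 Zs \<epsilon> (\<delta> \<epsilon>)) G"
      using L2v L2G by (simp add: U_def h_def mult_ac)
  qed
qed

end
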